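(* Let $G$ be an étale groupoid and let $F\subset G^{(0)}$ be an open $G$-full subset. (1) If there is a continuous map $\theta:G^{(0)}\to G$ with $r(\theta(x))=x$ and $s(\theta(x))\in F$ for all $x\in G^{(0)}$, then $G$ is homologically similar to $G|F$. (2) If $G^{(0)}$ is $\sigma$-compact and totally disconnected, then $G$ is homologically similar to $G|F$.
   Context: An étale groupoid is a locally compact Hausdorff groupoid whose range map $r$ is a local homeomorphism; $s$ is the source map. $F\subset G^{(0)}$ is $G$-full if for every $x\in G^{(0)}$ there is $g$ with $r(g)=x$, $s(g)\in F$. $G|F=r^{-1}(F)\cap s^{-1}(F)$ is the reduction (an étale subgroupoid). A homomorphism is a continuous map preserving products of composable pairs; it is étale if it is a local homeomorphism. Homomorphisms $\rho,\sigma:G\to H$ are similar if there is continuous $\theta:G^{(0)}\to H$ with $\theta(r(g))\rho(g)=\sigma(g)\theta(s(g))$ for all $g$. $G,H$ are homologically similar if there are étale homomorphisms $\rho:G\to H$, $\sigma:H\to G$ with $\sigma\circ\rho$ similar to $\mathrm{id}_G$ and $\rho\circ\sigma$ similar to $\mathrm{id}_H$. *)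

theory Defs
  imports "HOL-Analysis.Analysis"
begin

record 'a groupoid =
  gtop :: "'a topology"
  gunits :: "'a set"
  grng :: "'a \<Rightarrow> 'a"
  gsrc :: "'a \<Rightarrow> 'a"
  gmult :: "'a \<Rightarrow> 'a \<Rightarrow> 'a"
  ginv :: "'a \<Rightarrow> 'a"

definition garr :: "('a, 'b) groupoid_scheme \<Rightarrow> 'a set" where
  "garr G = topspace (gtop G)"

definition gcomposable :: "('a, 'b) groupoid_scheme \<Rightarrow> ('a \<times> 'a) set" where
  "gcomposable G = {(g, h). g \<in> garr G \<and> h \<in> garr G \<and> gsrc G g = grng G h}"

definition unit_top :: "('a, 'b) groupoid_scheme \<Rightarrow> 'a topology" where
  "unit_top G = subtopology (gtop G) (gunits G)"

definition local_homeo :: "'a topology \<Rightarrow> 'b topology \<Rightarrow> ('a \<Rightarrow> 'b) \<Rightarrow> bool" where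
  "local_homeo X Y f \<longleftrightarrow> f \<in> topspace X \<rightarrow> topspace Y \<and>
     (\<forall>x \<in> topspace X. \<exists>U. openin X U \<and> x \<in> U \<and> openin Y (f ` U) \<and>
        homeomorphic_map (subtopology X U) (subtopology Y (f ` U)) f)"

definition groupoid :: "('a, 'b) groupoid_scheme \<Rightarrow> bool" where
  "groupoid G \<longleftrightarrow>
     gunits G \<subseteq> garr G \<and>
     (\<forall>g \<in> garr G. grng G g \<in> gunits G \<and> gsrc G g \<in> gunits G) \<and>
     (\<forall>x \<in> gunits G. grng G x = x \<and> gsrc G x = x) \<and>
     (\<forall>(g, h) \<in> gcomposable G. gmult G g h \<in> garr G \<and>
        grng G (gmult G g h) = grng G g \<and> gsrc G (gmult G g h) = gsrc G h) \<and>
     (\<forall>g \<in> garr G. \<forall>h \<in> garr G. \<forall>k \<in> garr G. gsrc G g = grng G h \<longrightarrow> gsrc G h = grng G k \<longrightarrow>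
        gmult G (gmult G g h) k = gmult G g (gmult G h k)) \<and>
     (\<forall>g \<in> garr G. gmult G (grng G g) g = g \<and> gmult G g (gsrc G g) = g) \<and>
     (\<forall>g \<in> garr G. ginv G g \<in> garr G \<and> grng G (ginv G g) = gsrc G g \<and>
        gsrc G (ginv G g) = grng G g \<and>
        gmult G g (ginv G g) = grng G g \<and> gmult G (ginv G g) g = gsrc G g)"

definition topological_groupoid :: "('a, 'b) groupoid_scheme \<Rightarrow> bool" where
  "topological_groupoid G \<longleftrightarrow> groupoid G \<and>
     continuous_map (gtop G) (unit_top G) (grng G) \<and>
     continuous_map (gtop G) (unit_top G) (gsrc G) \<and>
     continuous_map (gtop G) (gtop G) (ginv G) \<and>
     continuous_map (subtopology (prod_topology (gtop G) (gtop G)) (gcomposable G)) (gtop G)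
        (\<lambda>(g, h). gmult G g h)"

definition etale_groupoid :: "('a, 'b) groupoid_scheme \<Rightarrow> bool" where
  "etale_groupoid G \<longleftrightarrow> topological_groupoid G \<and>
     locally_compact_space (gtop G) \<and> Hausdorff_space (gtop G) \<and>
     local_homeo (gtop G) (unit_top G) (grng G)"

definition G_full :: "('a, 'b) groupoid_scheme \<Rightarrow> 'a set \<Rightarrow> bool" where
  "G_full G F \<longleftrightarrow> F \<subseteq> gunits G \<and>
     (\<forall>x \<in> gunits G. \<exists>g \<in> garr G. grng G g = x \<and> gsrc G g \<in> F)"

definition reduction :: "'a groupoid \<Rightarrow> 'a set \<Rightarrow> 'a groupoid" where
  "reduction G F = G\<lparr> gtop := subtopology (gtop G) {g \<in> garr G. grng G g \<in> F \<and> gsrc G g \<in> F},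
                     gunits := F \<rparr>"

definition groupoid_hom :: "'a groupoid \<Rightarrow> 'c groupoid \<Rightarrow> ('a \<Rightarrow> 'c) \<Rightarrow> bool" where
  "groupoid_hom G H f \<longleftrightarrow> continuous_map (gtop G) (gtop H) f \<and>
     (\<forall>(g, h) \<in> gcomposable G. (f g, f h) \<in> gcomposable H \<and>
        f (gmult G g h) = gmult H (f g) (f h))"

definition etale_hom :: "'a groupoid \<Rightarrow> 'c groupoid \<Rightarrow> ('a \<Rightarrow> 'c) \<Rightarrow> bool" where
  "etale_hom G H f \<longleftrightarrow> groupoid_hom G H f \<and> local_homeo (gtop G) (gtop H) f"

definition similar :: "'a groupoid \<Rightarrow> 'c groupoid \<Rightarrow> ('a \<Rightarrow> 'c) \<Rightarrow> ('a \<Rightarrow> 'c) \<Rightarrow> bool" where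
  "similar G H \<rho> \<sigma> \<longleftrightarrow> (\<exists>\<theta>. continuous_map (unit_top G) (gtop H) \<theta> \<and>
     (\<forall>g \<in> garr G. (\<theta> (grng G g), \<rho> g) \<in> gcomposable H \<and>
        (\<sigma> g, \<theta> (gsrc G g)) \<in> gcomposable H \<and>
        gmult H (\<theta> (grng G g)) (\<rho> g) = gmult H (\<sigma> g) (\<theta> (gsrc G g))))"

definition homologically_similar :: "'a groupoid \<Rightarrow> 'c groupoid \<Rightarrow> bool" where
  "homologically_similar G H \<longleftrightarrow> (\<exists>\<rho> \<sigma>. etale_hom G H \<rho> \<and> etale_hom H G \<sigma> \<and>
     similar G G (\<sigma> \<circ> \<rho>) id \<and> similar H H (\<rho> \<circ> \<sigma>) id)"

definition sigma_compact_space :: "'a topology \<Rightarrow> bool" where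
  "sigma_compact_space X \<longleftrightarrow> (\<exists>K :: nat \<Rightarrow> 'a set. (\<forall>n. compactin X (K n)) \<and>
     topspace X = (\<Union>n. K n))"

definition totally_disconnected_space :: "'a topology \<Rightarrow> bool" where
  "totally_disconnected_space X \<longleftrightarrow>
     (\<forall>S. connectedin X S \<longrightarrow> (\<exists>a. S \<subseteq> {a}))"

end

theory Submission
  imports Defs
begin

context fixes G :: "('a,'b) groupoid_scheme" assumes gG: "groupoid G" begin

lemma units_arr: "x \<in> gunits G \<Longrightarrow> x \<in> garr G"
  using gG unfolding groupoid_def by blast
lemma r_units[simp]: "g \<in> garr G \<Longrightarrow> grng G g \<in> gunits G"
  using gG unfolding groupoid_def by blast
lemma s_units[simp]: "g \<in> garr G \<Longrightarrow> gsrc G g \<in> gunits G"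
  using gG unfolding groupoid_def by blast
lemma r_arr[simp]: "g \<in> garr G \<Longrightarrow> grng G g \<in> garr G"
  using units_arr r_units by blast
lemma s_arr[simp]: "g \<in> garr G \<Longrightarrow> gsrc G g \<in> garr G"
  using units_arr s_units by blast
lemma r_unit[simp]: "x \<in> gunits G \<Longrightarrow> grng G x = x"
  using gG unfolding groupoid_def by blast
lemma s_unit[simp]: "x \<in> gunits G \<Longrightarrow> gsrc G x = x"
  using gG unfolding groupoid_def by blast
lemma mult_arr[simp]: "g \<in> garr G \<Longrightarrow> h \<in> garr G \<Longrightarrow> gsrc G g = grng G h \<Longrightarrow> gmult G g h \<in> garr G"
  using gG unfolding groupoid_def gcomposable_def by blast
lemma r_mult[simp]: "g \<in> garr G \<Longrightarrow> h \<in> garr G \<Longrightarrow> gsrc G g = grng G h \<Longrightarrow> grng G (gmult G g h) = grng G g"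
  using gG unfolding groupoid_def gcomposable_def by blast
lemma s_mult[simp]: "g \<in> garr G \<Longrightarrow> h \<in> garr G \<Longrightarrow> gsrc G g = grng G h \<Longrightarrow> gsrc G (gmult G g h) = gsrc G h"
  using gG unfolding groupoid_def gcomposable_def by blast
lemma assoc[simp]: "g \<in> garr G \<Longrightarrow> h \<in> garr G \<Longrightarrow> k \<in> garr G \<Longrightarrow> gsrc G g = grng G h \<Longrightarrow> gsrc G h = grng G k
   \<Longrightarrow> gmult G (gmult G g h) k = gmult G g (gmult G h k)"
  using gG unfolding groupoid_def by blast
lemma unit_l[simp]: "g \<in> garr G \<Longrightarrow> gmult G (grng G g) g = g"
  using gG unfolding groupoid_def by blast
lemma unit_r[simp]: "g \<in> garr G \<Longrightarrow> gmult G g (gsrc G g) = g"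
  using gG unfolding groupoid_def by blast
lemma inv_arr[simp]: "g \<in> garr G \<Longrightarrow> ginv G g \<in> garr G"
  using gG unfolding groupoid_def by blast
lemma r_inv[simp]: "g \<in> garr G \<Longrightarrow> grng G (ginv G g) = gsrc G g"
  using gG unfolding groupoid_def by blast
lemma s_inv[simp]: "g \<in> garr G \<Longrightarrow> gsrc G (ginv G g) = grng G g"
  using gG unfolding groupoid_def by blast
lemma inv_r[simp]: "g \<in> garr G \<Longrightarrow> gmult G g (ginv G g) = grng G g"
  using gG unfolding groupoid_def by blast
lemma inv_l[simp]: "g \<in> garr G \<Longrightarrow> gmult G (ginv G g) g = gsrc G g"
  using gG unfolding groupoid_def by blast
lemma unit_l'[simp]: "g \<in> garr G \<Longrightarrow> x = grng G g \<Longrightarrow> gmult G x g = g"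
  by simp
lemma unit_r'[simp]: "g \<in> garr G \<Longrightarrow> x = gsrc G g \<Longrightarrow> gmult G g x = g"
  by simp
lemma cancel1[simp]: "x \<in> garr G \<Longrightarrow> y \<in> garr G \<Longrightarrow> grng G y = grng G x \<Longrightarrow> gmult G x (gmult G (ginv G x) y) = y"
  by (metis assoc inv_arr inv_r r_inv s_inv unit_l')
lemma cancel2[simp]: "x \<in> garr G \<Longrightarrow> y \<in> garr G \<Longrightarrow> gsrc G x = grng G y \<Longrightarrow> gmult G (ginv G x) (gmult G x y) = y"
  by (metis assoc inv_arr inv_l r_inv s_inv unit_l')
lemma inv_inv[simp]: "g \<in> garr G \<Longrightarrow> ginv G (ginv G g) = g"
proof -
  assume g: "g \<in> garr G"
  have 1: "gmult G (ginv G g) g = gsrc G g" using g by simp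
  have "ginv G (ginv G g) = gmult G (ginv G (ginv G g)) (gsrc G g)" using g by simp
  also have "\<dots> = gmult G (ginv G (ginv G g)) (gmult G (ginv G g) g)" using 1 by simp
  also have "\<dots> = g" using g by (intro cancel2) simp_all
  finally show ?thesis .
qed
end

lemma cont_local:
  assumes "f \<in> topspace X \<rightarrow> topspace Y"
    and "\<And>x. x \<in> topspace X \<Longrightarrow> \<exists>U. openin X U \<and> x \<in> U \<and> continuous_map (subtopology X U) Y f"
  shows "continuous_map X Y f"
  unfolding continuous_map_def
proof (intro conjI allI impI)
  show "f \<in> topspace X \<rightarrow> topspace Y" by fact
  fix V assume V: "openin Y V"
  show "openin X {x \<in> topspace X. f x \<in> V}"
  proof (subst openin_subopen, intro ballI)
    fix x assume x: "x \<in> {x \<in> topspace X. f x \<in> V}"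
    then obtain U where U: "openin X U" "x \<in> U" "continuous_map (subtopology X U) Y f"
      using assms(2) by blast
    have "openin (subtopology X U) {y \<in> topspace (subtopology X U). f y \<in> V}"
      using U(3) V openin_continuous_map_preimage by blast
    then have "openin X {y \<in> topspace (subtopology X U). f y \<in> V}"
      using U(1) openin_trans_full by blast
    moreover have "{y \<in> topspace (subtopology X U). f y \<in> V} \<subseteq> {x \<in> topspace X. f x \<in> V}" by auto
    moreover have "x \<in> {y \<in> topspace (subtopology X U). f y \<in> V}" using x U by auto
    ultimately show "\<exists>T. openin X T \<and> x \<in> T \<and> T \<subseteq> {x \<in> topspace X. f x \<in> V}" by blast
  qed
qed

lemma cont_mult:
  assumes "topological_groupoid G" "continuous_map Z (gtop G) a" "continuous_map Z (gtop G) b"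
    "\<And>z. z \<in> topspace Z \<Longrightarrow> gsrc G (a z) = grng G (b z)"
  shows "continuous_map Z (gtop G) (\<lambda>z. gmult G (a z) (b z))"
proof -
  have m: "continuous_map (subtopology (prod_topology (gtop G) (gtop G)) (gcomposable G)) (gtop G)
        (\<lambda>(g, h). gmult G g h)" using assms(1) unfolding topological_groupoid_def by blast
  have "continuous_map Z (subtopology (prod_topology (gtop G) (gtop G)) (gcomposable G)) (\<lambda>z. (a z, b z))"
    apply (rule continuous_map_into_subtopology)
    using assms(2,3) apply (simp add: continuous_map_paired)
    using assms(2,3,4) by (auto simp: gcomposable_def garr_def continuous_map_def)
  from continuous_map_compose[OF this m] show ?thesis by (simp add: o_def)
qed


lemma topspace_unit_top: "groupoid G \<Longrightarrow> topspace (unit_top G) = gunits G"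
  unfolding unit_top_def using units_arr by (auto simp: garr_def)

lemma etale_parts:
  assumes "etale_groupoid G"
  shows "groupoid G" "topological_groupoid G"
    "continuous_map (gtop G) (gtop G) (grng G)" "continuous_map (gtop G) (gtop G) (gsrc G)"
    "continuous_map (gtop G) (unit_top G) (grng G)" "continuous_map (gtop G) (unit_top G) (gsrc G)"
    "continuous_map (gtop G) (gtop G) (ginv G)"
  using assms unfolding etale_groupoid_def topological_groupoid_def unit_top_def
  by (auto intro: continuous_map_into_fulltopology)

lemma rloc:
  assumes "etale_groupoid G" "a \<in> garr G"
  shows "\<exists>U \<phi>. openin (gtop G) U \<and> a \<in> U \<and> openin (unit_top G) (grng G ` U) \<and>
     continuous_map (subtopology (unit_top G) (grng G ` U)) (gtop G) \<phi> \<and>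
     (\<forall>u\<in>U. \<phi> (grng G u) = u) \<and> (\<forall>y\<in>grng G ` U. \<phi> y \<in> U)"
proof -
  have lh: "local_homeo (gtop G) (unit_top G) (grng G)" using assms(1) unfolding etale_groupoid_def by blast
  then obtain U where U: "openin (gtop G) U" "a \<in> U" "openin (unit_top G) (grng G ` U)"
    "homeomorphic_map (subtopology (gtop G) U) (subtopology (unit_top G) (grng G ` U)) (grng G)"
    using assms(2) unfolding local_homeo_def garr_def by blast
  then obtain \<phi> where \<phi>: "homeomorphic_maps (subtopology (gtop G) U) (subtopology (unit_top G) (grng G ` U)) (grng G) \<phi>"
    using homeomorphic_map_maps by blast
  have Us: "U \<subseteq> topspace (gtop G)" using U(1) openin_subset by blast
  have rUs: "grng G ` U \<subseteq> topspace (unit_top G)" using U(3) openin_subset by blast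
  have c: "continuous_map (subtopology (unit_top G) (grng G ` U)) (subtopology (gtop G) U) \<phi>"
    using \<phi> unfolding homeomorphic_maps_def by blast
  show ?thesis
    apply (rule exI[of _ U], rule exI[of _ \<phi>])
    using U \<phi> Us rUs continuous_map_into_fulltopology[OF c] c unfolding homeomorphic_maps_def
    by (auto simp: Int_absorb1 Pi_iff continuous_map_def[of _ "subtopology (gtop G) U"])
qed

lemma sloc:
  assumes "etale_groupoid G" "a \<in> garr G"
  shows "\<exists>U \<psi>. openin (gtop G) U \<and> a \<in> U \<and> openin (unit_top G) (gsrc G ` U) \<and>
     continuous_map (subtopology (unit_top G) (gsrc G ` U)) (gtop G) \<psi> \<and>
     (\<forall>u\<in>U. \<psi> (gsrc G u) = u) \<and> (\<forall>y\<in>gsrc G ` U. \<psi> y \<in> U)"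
proof -
  note P = etale_parts[OF assms(1)]
  have ia: "ginv G a \<in> garr G" using assms P(1) by simp
  obtain U \<phi> where U: "openin (gtop G) U" "ginv G a \<in> U" "openin (unit_top G) (grng G ` U)"
     "continuous_map (subtopology (unit_top G) (grng G ` U)) (gtop G) \<phi>"
     "\<forall>u\<in>U. \<phi> (grng G u) = u" "\<forall>y\<in>grng G ` U. \<phi> y \<in> U"
    using rloc[OF assms(1) ia] by blast
  have Us: "U \<subseteq> garr G" using U(1) openin_subset garr_def by metis
  define U' where "U' = {g \<in> topspace (gtop G). ginv G g \<in> U}"
  have o: "openin (gtop G) U'" unfolding U'_def using P(7) U(1) openin_continuous_map_preimage by blast
  have eq: "gsrc G ` U' = grng G ` U"
  proof
    show "gsrc G ` U' \<subseteq> grng G ` U"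
      using P(1) by (force simp: U'_def garr_def[symmetric])
    show "grng G ` U \<subseteq> gsrc G ` U'"
    proof
      fix y assume "y \<in> grng G ` U"
      then obtain u where "u \<in> U" "y = grng G u" by blast
      then show "y \<in> gsrc G ` U'" using Us P(1)
        by (intro image_eqI[of _ _ "ginv G u"]) (auto simp: U'_def garr_def[symmetric])
    qed
  qed
  have c: "continuous_map (subtopology (unit_top G) (gsrc G ` U')) (gtop G) (ginv G \<circ> \<phi>)"
    unfolding eq using continuous_map_compose[OF U(4) P(7)] .
  show ?thesis
    apply (rule exI[of _ U'], rule exI[of _ "ginv G \<circ> \<phi>"])
    using o c U Us P(1) assms(2) unfolding eq
    by (auto simp: U'_def garr_def[symmetric])
qed

lemma units_open:
  assumes "etale_groupoid G" shows "openin (gtop G) (gunits G)"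
proof (subst openin_subopen, intro ballI)
  note P = etale_parts[OF assms(1)]
  fix x assume x: "x \<in> gunits G"
  have xa: "x \<in> garr G" using units_arr[OF P(1) x] .
  obtain U \<phi> where U: "openin (gtop G) U" "x \<in> U" "\<forall>u\<in>U. \<phi> (grng G u) = u"
    using rloc[OF assms xa] by blast
  have Us: "U \<subseteq> garr G" using U(1) openin_subset garr_def by metis
  define T where "T = {g \<in> topspace (subtopology (gtop G) U). grng G g \<in> U}"
  have "openin (subtopology (gtop G) U) T" unfolding T_def
    using openin_continuous_map_preimage[OF continuous_map_from_subtopology[OF P(3)] U(1)] .
  then have "openin (gtop G) T" using U(1) openin_trans_full by blast
  moreover have "x \<in> T" using x U Us P(1) by (auto simp: T_def garr_def[symmetric])
  moreover have "T \<subseteq> gunits G"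
  proof
    fix g assume g: "g \<in> T"
    then have "g \<in> U" "grng G g \<in> U" "g \<in> garr G" using Us by (auto simp: T_def)
    then have "g = grng G g" using U(3) P(1) by (metis r_unit r_units)
    then show "g \<in> gunits G" using \<open>g \<in> garr G\<close> P(1) by (metis r_units)
  qed
  ultimately show "\<exists>T. openin (gtop G) T \<and> x \<in> T \<and> T \<subseteq> gunits G" by blast
qed


lemma red_simps[simp]:
  "gtop (reduction G F) = subtopology (gtop G) {g \<in> garr G. grng G g \<in> F \<and> gsrc G g \<in> F}"
  "gunits (reduction G F) = F" "grng (reduction G F) = grng G" "gsrc (reduction G F) = gsrc G"
  "gmult (reduction G F) = gmult G" "ginv (reduction G F) = ginv G"
  by (simp_all add: reduction_def)

lemma garr_red: "garr (reduction G F) = {g \<in> garr G. grng G g \<in> F \<and> gsrc G g \<in> F}"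
  by (auto simp: garr_def)

lemma part1:
  fixes G :: "'a groupoid"
  assumes E: "etale_groupoid G" and Fo: "openin (unit_top G) F" and FU: "F \<subseteq> gunits G"
    and thc: "continuous_map (unit_top G) (gtop G) \<theta>"
    and th: "\<forall>x\<in>gunits G. grng G (\<theta> x) = x \<and> gsrc G (\<theta> x) \<in> F"
  shows "homologically_similar G (reduction G F)"
proof -
  note P = etale_parts[OF E]
  have gG[simp]: "groupoid G" using P(1) .
  have tsX: "topspace (gtop G) = garr G" by (simp add: garr_def)
  have thA[simp]: "x \<in> gunits G \<Longrightarrow> \<theta> x \<in> garr G" for x
    using thc topspace_unit_top[OF gG] by (auto simp: continuous_map_def garr_def)
  have rth[simp]: "x \<in> gunits G \<Longrightarrow> grng G (\<theta> x) = x" for x using th by blast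
  have sthF: "x \<in> gunits G \<Longrightarrow> gsrc G (\<theta> x) \<in> F" for x using th by blast
  have sthU[simp]: "x \<in> gunits G \<Longrightarrow> gsrc G (\<theta> x) \<in> gunits G" for x using sthF FU by blast
  define AF where "AF = {g \<in> garr G. grng G g \<in> F \<and> gsrc G g \<in> F}"
  define XF where "XF = subtopology (gtop G) AF"
  have AFs: "AF \<subseteq> garr G" by (auto simp: AF_def)
  have tsXF: "topspace XF = AF" using AFs by (auto simp: XF_def garr_def)
  have H: "gtop (reduction G F) = XF" "garr (reduction G F) = AF"
    by (simp_all add: XF_def AF_def garr_red)
  have AFo: "openin (gtop G) AF"
  proof -
    have "openin (gtop G) ({g \<in> topspace (gtop G). grng G g \<in> F} \<inter> {g \<in> topspace (gtop G). gsrc G g \<in> F})"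
      using openin_continuous_map_preimage[OF P(5) Fo] openin_continuous_map_preimage[OF P(6) Fo] by blast
    moreover have "{g \<in> topspace (gtop G). grng G g \<in> F} \<inter> {g \<in> topspace (gtop G). gsrc G g \<in> F} = AF"
      by (auto simp: AF_def garr_def)
    ultimately show ?thesis by simp
  qed
  define \<rho> where "\<rho> g = gmult G (ginv G (\<theta> (grng G g))) (gmult G g (\<theta> (gsrc G g)))" for g
  have rhoA: "g \<in> garr G \<Longrightarrow> \<rho> g \<in> AF" for g
    using sthF by (simp add: \<rho>_def AF_def)
  have rhoA'[simp]: "g \<in> garr G \<Longrightarrow> \<rho> g \<in> garr G" for g using rhoA AFs by blast
  have r_rho[simp]: "g \<in> garr G \<Longrightarrow> grng G (\<rho> g) = gsrc G (\<theta> (grng G g))" for g by (simp add: \<rho>_def)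
  have s_rho[simp]: "g \<in> garr G \<Longrightarrow> gsrc G (\<rho> g) = gsrc G (\<theta> (gsrc G g))" for g by (simp add: \<rho>_def)
  have thr: "continuous_map (gtop G) (gtop G) (\<lambda>g. \<theta> (grng G g))"
    using continuous_map_compose[OF P(5) thc] by (simp add: o_def)
  have ths: "continuous_map (gtop G) (gtop G) (\<lambda>g. \<theta> (gsrc G g))"
    using continuous_map_compose[OF P(6) thc] by (simp add: o_def)
  have rhoc0: "continuous_map (gtop G) (gtop G) \<rho>"
    unfolding \<rho>_def
    apply (rule cont_mult[OF P(2)])
      apply (rule continuous_map_compose[OF thr P(7), unfolded o_def])
     apply (rule cont_mult[OF P(2) continuous_map_id[unfolded id_def] ths])
    by (auto simp: tsX)
  have rhoc: "continuous_map (gtop G) XF \<rho>"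
    unfolding XF_def using rhoc0 rhoA by (auto intro!: continuous_map_into_subtopology simp: tsX)
  have hom: "groupoid_hom G (reduction G F) \<rho>"
    unfolding groupoid_hom_def H
  proof (intro conjI rhoc ballI)
    fix p assume "p \<in> gcomposable G"
    then obtain g h where p: "p = (g, h)" "g \<in> garr G" "h \<in> garr G" "gsrc G g = grng G h"
      by (auto simp: gcomposable_def)
    have "(\<rho> g, \<rho> h) \<in> gcomposable (reduction G F)"
      using p rhoA by (simp add: gcomposable_def H)
    moreover have "\<rho> (gmult G g h) = gmult G (\<rho> g) (\<rho> h)"
      using p by (simp add: \<rho>_def)
    ultimately show "case p of (g, h) \<Rightarrow> (\<rho> g, \<rho> h) \<in> gcomposable (reduction G F) \<and>
         \<rho> (gmult G g h) = gmult (reduction G F) (\<rho> g) (\<rho> h)" using p by simp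
  qed
  have sim1: "similar G G (id \<circ> \<rho>) id"
    unfolding similar_def
  proof (intro exI conjI ballI)
    show "continuous_map (unit_top G) (gtop G) \<theta>" by fact
    fix g assume g: "g \<in> garr G"
    then show "(\<theta> (grng G g), (id \<circ> \<rho>) g) \<in> gcomposable G" "(id g, \<theta> (gsrc G g)) \<in> gcomposable G"
      "gmult G (\<theta> (grng G g)) ((id \<circ> \<rho>) g) = gmult G (id g) (\<theta> (gsrc G g))"
      by (simp_all add: gcomposable_def \<rho>_def)
  qed
  have FAF: "F \<subseteq> AF" using FU by (auto simp: AF_def units_arr)
  have utH: "unit_top (reduction G F) = subtopology (gtop G) F"
    unfolding unit_top_def using FAF by (simp add: subtopology_subtopology AF_def[symmetric] Int_absorb1)
  have sim2: "similar (reduction G F) (reduction G F) (\<rho> \<circ> id) id"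
    unfolding similar_def
  proof (intro exI conjI ballI)
    have "continuous_map (subtopology (gtop G) F) (gtop G) \<theta>"
      using thc FU unfolding unit_top_def by (metis continuous_map_from_subtopology_mono)
    then show "continuous_map (unit_top (reduction G F)) (gtop (reduction G F)) \<theta>"
      unfolding utH H XF_def using FU sthF
      by (intro continuous_map_into_subtopology) (auto simp: AF_def subset_iff)
    fix g assume g: "g \<in> garr (reduction G F)"
    then have g': "g \<in> garr G" "grng G g \<in> F" "gsrc G g \<in> F" by (auto simp: H AF_def)
    show "(\<theta> (grng (reduction G F) g), (\<rho> \<circ> id) g) \<in> gcomposable (reduction G F)"
       "(id g, \<theta> (gsrc (reduction G F) g)) \<in> gcomposable (reduction G F)"
      "gmult (reduction G F) (\<theta> (grng (reduction G F) g)) ((\<rho> \<circ> id) g) =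
       gmult (reduction G F) (id g) (\<theta> (gsrc (reduction G F) g))"
    proof -
      have gU: "grng G g \<in> gunits G" "gsrc G g \<in> gunits G" using g' by simp_all
      have t1: "\<theta> (grng G g) \<in> AF" "\<theta> (gsrc G g) \<in> AF" "g \<in> AF" "\<rho> g \<in> AF"
        using gU g' sthF rhoA[of g] by (simp_all add: AF_def)
      show "(\<theta> (grng (reduction G F) g), (\<rho> \<circ> id) g) \<in> gcomposable (reduction G F)"
        using t1 g'(1) by (simp add: gcomposable_def H)
      show "(id g, \<theta> (gsrc (reduction G F) g)) \<in> gcomposable (reduction G F)"
        using t1 g'(1) by (simp add: gcomposable_def H)
      show "gmult (reduction G F) (\<theta> (grng (reduction G F) g)) ((\<rho> \<circ> id) g) =
       gmult (reduction G F) (id g) (\<theta> (gsrc (reduction G F) g))"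
        using g'(1) by (simp add: \<rho>_def)
    qed
  qed
  have et2: "etale_hom (reduction G F) G id"
    unfolding etale_hom_def groupoid_hom_def local_homeo_def H
  proof (intro conjI ballI)
    show "continuous_map XF (gtop G) id" unfolding XF_def by (simp add: continuous_map_from_subtopology)
    show "id \<in> topspace XF \<rightarrow> topspace (gtop G)" using tsXF AFs tsX by auto
    fix p assume "p \<in> gcomposable (reduction G F)"
    then show "case p of (g, h) \<Rightarrow> (id g, id h) \<in> gcomposable G \<and> id (gmult (reduction G F) g h) = gmult G (id g) (id h)"
      by (auto simp: gcomposable_def H AF_def)
  next
    fix x assume x: "x \<in> topspace XF"
    show "\<exists>U. openin XF U \<and> x \<in> U \<and> openin (gtop G) (id ` U) \<and>
              homeomorphic_map (subtopology XF U) (subtopology (gtop G) (id ` U)) id"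
      apply (rule exI[of _ AF])
      using x AFo tsXF by (simp add: XF_def subtopology_subtopology openin_subtopology_refl openin_subset)
  qed
  have lh: "local_homeo (gtop G) XF \<rho>"
    unfolding local_homeo_def
  proof (intro conjI ballI)
    show "\<rho> \<in> topspace (gtop G) \<rightarrow> topspace XF" using rhoA tsX tsXF by auto
    fix g assume g: "g \<in> topspace (gtop G)"
    then have gA: "g \<in> garr G" by (simp add: tsX)
    define a where "a = \<theta> (grng G g)"
    define b where "b = \<theta> (gsrc G g)"
    have aA: "a \<in> garr G" "b \<in> garr G" using gA by (simp_all add: a_def b_def)
    obtain Ua \<psi>a where Ua: "openin (gtop G) Ua" "a \<in> Ua" "openin (unit_top G) (gsrc G ` Ua)"
     "continuous_map (subtopology (unit_top G) (gsrc G ` Ua)) (gtop G) \<psi>a"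
     "\<forall>u\<in>Ua. \<psi>a (gsrc G u) = u" "\<forall>y\<in>gsrc G ` Ua. \<psi>a y \<in> Ua"
      using sloc[OF E aA(1)] by blast
    obtain Ub \<psi>b where Ub: "openin (gtop G) Ub" "b \<in> Ub" "openin (unit_top G) (gsrc G ` Ub)"
     "continuous_map (subtopology (unit_top G) (gsrc G ` Ub)) (gtop G) \<psi>b"
     "\<forall>u\<in>Ub. \<psi>b (gsrc G u) = u" "\<forall>y\<in>gsrc G ` Ub. \<psi>b y \<in> Ub"
      using sloc[OF E aA(2)] by blast
    obtain Va \<phi>a where Va: "openin (gtop G) Va" "a \<in> Va" "\<forall>u\<in>Va. \<phi>a (grng G u) = u"
      using rloc[OF E aA(1)] by blast
    obtain Vb \<phi>b where Vb: "openin (gtop G) Vb" "b \<in> Vb" "\<forall>u\<in>Vb. \<phi>b (grng G u) = u"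
      using rloc[OF E aA(2)] by blast
    have UaA: "Ua \<subseteq> garr G" "Ub \<subseteq> garr G" "Va \<subseteq> garr G" "Vb \<subseteq> garr G"
      using Ua(1) Ub(1) Va(1) Vb(1) openin_subset tsX by metis+
    have psa: "y \<in> gsrc G ` Ua \<Longrightarrow> \<psi>a y \<in> Ua \<and> \<psi>a y \<in> garr G \<and> gsrc G (\<psi>a y) = y" for y
      using Ua UaA by auto
    have psb: "y \<in> gsrc G ` Ub \<Longrightarrow> \<psi>b y \<in> Ub \<and> \<psi>b y \<in> garr G \<and> gsrc G (\<psi>b y) = y" for y
      using Ub UaA by auto
    have injVa: "u \<in> Va \<Longrightarrow> v \<in> Va \<Longrightarrow> grng G u = grng G v \<Longrightarrow> u = v" for u v using Va by metis
    have injVb: "u \<in> Vb \<Longrightarrow> v \<in> Vb \<Longrightarrow> grng G u = grng G v \<Longrightarrow> u = v" for u v using Vb by metis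
    define U where "U = {g' \<in> topspace (gtop G). \<theta> (grng G g') \<in> Ua \<inter> Va} \<inter> {g' \<in> topspace (gtop G). \<theta> (gsrc G g') \<in> Ub \<inter> Vb}"
    have Uo: "openin (gtop G) U" unfolding U_def
      using openin_continuous_map_preimage[OF thr openin_Int[OF Ua(1) Va(1)]]
        openin_continuous_map_preimage[OF ths openin_Int[OF Ub(1) Vb(1)]] by blast
    have gU: "g \<in> U" using g Ua Va Ub Vb by (simp add: U_def a_def b_def)
    have UA: "U \<subseteq> garr G" by (auto simp: U_def tsX)
    define W0 where "W0 = {h \<in> topspace XF. grng G h \<in> gsrc G ` Ua} \<inter> {h \<in> topspace XF. gsrc G h \<in> gsrc G ` Ub}"
    have rXF: "continuous_map XF (unit_top G) (grng G)" "continuous_map XF (unit_top G) (gsrc G)"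
      unfolding XF_def using P(5,6) by (simp_all add: continuous_map_from_subtopology)
    have W0o: "openin XF W0" unfolding W0_def
      using openin_continuous_map_preimage[OF rXF(1) Ua(3)] openin_continuous_map_preimage[OF rXF(2) Ub(3)] by blast
    have W0s: "W0 \<subseteq> AF" by (auto simp: W0_def tsXF)
    have W0A: "h \<in> W0 \<Longrightarrow> h \<in> garr G" for h using W0s AFs by blast
    have XW: "subtopology XF W0 = subtopology (gtop G) W0"
      using W0s by (simp add: XF_def subtopology_subtopology Int_absorb1)
    have tsW: "topspace (subtopology (gtop G) W0) = W0" using W0s AFs by (auto simp: tsX)
    have cra: "continuous_map (subtopology (gtop G) W0) (gtop G) (\<lambda>h. \<psi>a (grng G h))"
    proof -
      have "continuous_map (subtopology (gtop G) W0) (subtopology (unit_top G) (gsrc G ` Ua)) (grng G)"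
        by (rule continuous_map_into_subtopology[OF continuous_map_from_subtopology[OF P(5)]])
          (auto simp: tsW W0_def)
      from continuous_map_compose[OF this Ua(4)] show ?thesis by (simp add: o_def)
    qed
    have csb: "continuous_map (subtopology (gtop G) W0) (gtop G) (\<lambda>h. \<psi>b (gsrc G h))"
    proof -
      have "continuous_map (subtopology (gtop G) W0) (subtopology (unit_top G) (gsrc G ` Ub)) (gsrc G)"
        by (rule continuous_map_into_subtopology[OF continuous_map_from_subtopology[OF P(6)]])
          (auto simp: tsW W0_def)
      from continuous_map_compose[OF this Ub(4)] show ?thesis by (simp add: o_def)
    qed
    define \<tau> where "\<tau> h = gmult G (\<psi>a (grng G h)) (gmult G h (ginv G (\<psi>b (gsrc G h))))" for h
    have W0p: "h \<in> W0 \<Longrightarrow> \<psi>a (grng G h) \<in> Ua \<and> \<psi>a (grng G h) \<in> garr G \<and> gsrc G (\<psi>a (grng G h)) = grng G h \<and>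
        \<psi>b (gsrc G h) \<in> Ub \<and> \<psi>b (gsrc G h) \<in> garr G \<and> gsrc G (\<psi>b (gsrc G h)) = gsrc G h" for h
      using psa psb by (auto simp: W0_def)
    have tauA: "h \<in> W0 \<Longrightarrow> \<tau> h \<in> garr G" for h using W0p[of h] W0A[of h] by (simp add: \<tau>_def)
    have tauc: "continuous_map (subtopology (gtop G) W0) (gtop G) \<tau>"
      unfolding \<tau>_def
      apply (rule cont_mult[OF P(2) cra])
       apply (rule cont_mult[OF P(2) continuous_map_from_subtopology[OF continuous_map_id[unfolded id_def]]])
        apply (rule continuous_map_compose[OF csb P(7), unfolded o_def])
      using W0p W0A by (auto simp: tsW)
    define V where "V = {h \<in> topspace (subtopology (gtop G) W0). \<psi>a (grng G h) \<in> Va} \<inter>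
       {h \<in> topspace (subtopology (gtop G) W0). \<psi>b (gsrc G h) \<in> Vb} \<inter> {h \<in> topspace (subtopology (gtop G) W0). \<tau> h \<in> U}"
    have Vo': "openin (subtopology (gtop G) W0) V" unfolding V_def
      using openin_continuous_map_preimage[OF cra Va(1)] openin_continuous_map_preimage[OF csb Vb(1)]
        openin_continuous_map_preimage[OF tauc Uo] by blast
    have Vo: "openin XF V" using Vo' W0o XW by (metis openin_trans_full)
    have VW: "V \<subseteq> W0" using tsW by (auto simp: V_def)
    have tauU: "h \<in> V \<Longrightarrow> \<tau> h \<in> U" for h by (auto simp: V_def)
    have rt: "g' \<in> U \<Longrightarrow> \<tau> (\<rho> g') = g' \<and> \<rho> g' \<in> V" for g'
    proof -
      assume g': "g' \<in> U"
      then have g'A: "g' \<in> garr G" using UA by blast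
      have t1: "\<theta> (grng G g') \<in> Ua" "\<theta> (grng G g') \<in> Va" "\<theta> (gsrc G g') \<in> Ub" "\<theta> (gsrc G g') \<in> Vb"
        using g' by (auto simp: U_def)
      have e1: "\<psi>a (grng G (\<rho> g')) = \<theta> (grng G g')" using t1 Ua(5) g'A by simp
      have e2: "\<psi>b (gsrc G (\<rho> g')) = \<theta> (gsrc G g')" using t1 Ub(5) g'A by simp
      have inW: "\<rho> g' \<in> W0" using t1 g'A rhoA[OF g'A] by (auto simp: W0_def tsXF)
      have tt: "\<tau> (\<rho> g') = g'" unfolding \<tau>_def e1 e2 using g'A by (simp add: \<rho>_def)
      show ?thesis using tt inW t1 e1 e2 g' tsW by (simp add: V_def)
    qed
    have tr: "h \<in> V \<Longrightarrow> \<rho> (\<tau> h) = h" for h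
    proof -
      assume h: "h \<in> V"
      then have hW: "h \<in> W0" using VW by blast
      note w = W0p[OF hW]
      have hA: "h \<in> garr G" using W0A[OF hW] .
      have tU: "\<tau> h \<in> U" using tauU[OF h] .
      have tA: "\<tau> h \<in> garr G" using tauA[OF hW] .
      have e1: "\<theta> (grng G (\<tau> h)) = \<psi>a (grng G h)"
        apply (rule injVa)
        using tU h apply (auto simp: U_def V_def)[2]
        using w hA tA by (simp add: \<tau>_def)
      have e2: "\<theta> (gsrc G (\<tau> h)) = \<psi>b (gsrc G h)"
        apply (rule injVb)
        using tU h apply (auto simp: U_def V_def)[2]
        using w hA tA by (simp add: \<tau>_def)
      show ?thesis unfolding \<rho>_def e1 e2 using w hA by (simp add: \<tau>_def)
    qed
    have img: "\<rho> ` U = V"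
    proof
      show "\<rho> ` U \<subseteq> V" using rt by blast
      show "V \<subseteq> \<rho> ` U"
      proof
        fix h assume "h \<in> V"
        then show "h \<in> \<rho> ` U" using tr tauU by (metis image_eqI)
      qed
    qed
    have XV: "subtopology XF V = subtopology (gtop G) V"
      using VW W0s by (simp add: XF_def subtopology_subtopology Int_absorb1)
    have tsV: "topspace (subtopology (gtop G) V) = V" using VW W0s AFs by (auto simp: tsX)
    have tsU: "topspace (subtopology (gtop G) U) = U" using UA by (auto simp: tsX)
    have hm: "homeomorphic_maps (subtopology (gtop G) U) (subtopology XF V) \<rho> \<tau>"
      unfolding homeomorphic_maps_def XV
    proof (intro conjI ballI)
      show "continuous_map (subtopology (gtop G) U) (subtopology (gtop G) V) \<rho>"
        by (rule continuous_map_into_subtopology[OF continuous_map_from_subtopology[OF rhoc0]])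
          (use rt tsU in auto)
      have "continuous_map (subtopology (gtop G) V) (gtop G) \<tau>"
        using continuous_map_from_subtopology_mono[OF tauc VW] .
      then show "continuous_map (subtopology (gtop G) V) (subtopology (gtop G) U) \<tau>"
        by (rule continuous_map_into_subtopology) (use tauU tsV in auto)
      show "\<And>x. x \<in> topspace (subtopology (gtop G) U) \<Longrightarrow> \<tau> (\<rho> x) = x" using rt tsU by auto
      show "\<And>y. y \<in> topspace (subtopology (gtop G) V) \<Longrightarrow> \<rho> (\<tau> y) = y" using tr tsV by auto
    qed
    show "\<exists>U. openin (gtop G) U \<and> g \<in> U \<and> openin XF (\<rho> ` U) \<and>
            homeomorphic_map (subtopology (gtop G) U) (subtopology XF (\<rho> ` U)) \<rho>"
      using Uo gU Vo hm img homeomorphic_map_maps by metis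
  qed
  have et1: "etale_hom G (reduction G F) \<rho>"
    unfolding etale_hom_def using hom lh H by simp
  show ?thesis unfolding homologically_similar_def
    using et1 et2 sim1 sim2 by blast
qed


lemma part2:
  fixes G :: "'a groupoid"
  assumes E: "etale_groupoid G" and Fo: "openin (unit_top G) F" and full: "G_full G F"
    and sc: "sigma_compact_space (unit_top G)" and td: "totally_disconnected_space (unit_top G)"
  shows "\<exists>\<theta>. continuous_map (unit_top G) (gtop G) \<theta> \<and>
            (\<forall>x \<in> gunits G. grng G (\<theta> x) = x \<and> gsrc G (\<theta> x) \<in> F)"
proof -
  note P = etale_parts[OF E]
  have gG[simp]: "groupoid G" using P(1) .
  define Y where "Y = unit_top G"
  have tsY: "topspace Y = gunits G" unfolding Y_def using topspace_unit_top[OF gG] .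
  define sec where "sec C \<phi> \<longleftrightarrow> continuous_map (subtopology Y C) (gtop G) \<phi> \<and>
      (\<forall>y\<in>C. grng G (\<phi> y) = y \<and> gsrc G (\<phi> y) \<in> F)" for C \<phi>
  have locsec: "\<exists>W \<phi>. openin Y W \<and> x \<in> W \<and> sec W \<phi>" if x: "x \<in> gunits G" for x
  proof -
    obtain g where g: "g \<in> garr G" "grng G g = x" "gsrc G g \<in> F" using full x unfolding G_full_def by blast
    obtain U \<phi> where U: "openin (gtop G) U" "g \<in> U" "openin Y (grng G ` U)"
     "continuous_map (subtopology Y (grng G ` U)) (gtop G) \<phi>"
     "\<forall>u\<in>U. \<phi> (grng G u) = u" "\<forall>y\<in>grng G ` U. \<phi> y \<in> U"
      using rloc[OF E g(1)] unfolding Y_def by blast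
    have UA: "U \<subseteq> garr G" using U(1) openin_subset garr_def by metis
    have rUs: "grng G ` U \<subseteq> topspace Y" using U(3) openin_subset by blast
    define W where "W = {y \<in> topspace (subtopology Y (grng G ` U)). gsrc G (\<phi> y) \<in> F}"
    have "continuous_map (subtopology Y (grng G ` U)) Y (gsrc G \<circ> \<phi>)"
      using continuous_map_compose[OF U(4) P(6)] unfolding Y_def .
    then have "openin (subtopology Y (grng G ` U)) {y \<in> topspace (subtopology Y (grng G ` U)). (gsrc G \<circ> \<phi>) y \<in> F}"
      by (rule openin_continuous_map_preimage[OF _ Fo[folded Y_def]])
    then have "openin (subtopology Y (grng G ` U)) W"
      unfolding W_def o_def .
    then have Wo: "openin Y W" using U(3) openin_trans_full by blast
    have WrU: "W \<subseteq> grng G ` U" using rUs by (auto simp: W_def)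
    have "x \<in> W" using g U rUs by (auto simp: W_def)
    moreover have "sec W \<phi>" unfolding sec_def
    proof (intro conjI ballI)
      show "continuous_map (subtopology Y W) (gtop G) \<phi>"
        using continuous_map_from_subtopology_mono[OF U(4) WrU] .
      fix y assume y: "y \<in> W"
      then obtain u where "u \<in> U" "y = grng G u" using WrU by blast
      then show "grng G (\<phi> y) = y" using U(5) by simp
      show "gsrc G (\<phi> y) \<in> F" using y by (simp add: W_def)
    qed
    ultimately show ?thesis using Wo by blast
  qed
  have HY: "Hausdorff_space Y" unfolding Y_def unit_top_def
    using E Hausdorff_space_subtopology etale_groupoid_def by blast
  have LY: "locally_compact_space Y" unfolding Y_def unit_top_def
    using E units_open locally_compact_space_open_subset etale_groupoid_def by blast
  have clop: "\<exists>C. openin Y C \<and> closedin Y C \<and> x \<in> C \<and> C \<subseteq> W" if xY: "x \<in> topspace Y" and Wo: "openin Y W" and xW: "x \<in> W" for x W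
  proof -
    have cc: "connected_component_of_set Y x = {x}"
    proof -
      have "connectedin Y (connected_component_of_set Y x)" by (rule connectedin_connected_component_of)
      then obtain a where "connected_component_of_set Y x \<subseteq> {a}" using td[folded Y_def]
        unfolding totally_disconnected_space_def by blast
      moreover have "x \<in> connected_component_of_set Y x" using xY connected_component_of_refl by fastforce
      ultimately show ?thesis by blast
    qed
    then have "{x} \<in> connected_components_of Y" using xY unfolding connected_components_of_def by force
    then obtain U V where UV: "openin Y U" "openin Y V" "disjnt U V" "U \<union> V = topspace Y" "{x} \<subseteq> U" "U \<subseteq> W"
      using wilder_locally_compact_component_thm[OF LY HY _ _ Wo] xY xW by (metis compactin_sing empty_subsetI insert_subset)
    have "topspace Y - U = V" using UV(3,4) openin_subset[OF UV(2)] by (auto simp: disjnt_def)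
    then have "closedin Y U" using UV(1,2) openin_subset[OF UV(1)] by (simp add: closedin_def)
    then show ?thesis using UV by blast
  qed
  define good where "good C \<longleftrightarrow> openin Y C \<and> closedin Y C \<and> (\<exists>\<phi>. sec C \<phi>)" for C
  have cover: "\<exists>C. good C \<and> x \<in> C" if xY: "x \<in> topspace Y" for x
  proof -
    obtain W \<phi> where W: "openin Y W" "x \<in> W" "sec W \<phi>" using locsec xY tsY by blast
    obtain C where C: "openin Y C" "closedin Y C" "x \<in> C" "C \<subseteq> W" using clop[OF xY W(1,2)] by blast
    have "sec C \<phi>" using W(3) C(4) unfolding sec_def
      using continuous_map_from_subtopology_mono by blast
    then show ?thesis using C unfolding good_def by blast
  qed
  have "sigma_compact_space Y" using sc by (simp add: Y_def)
  then have "\<exists>K :: nat \<Rightarrow> 'a set. (\<forall>n. compactin Y (K n)) \<and> topspace Y = (\<Union>n. K n)"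
    unfolding sigma_compact_space_def .
  then obtain K :: "nat \<Rightarrow> 'a set" where KK: "(\<forall>n. compactin Y (K n)) \<and> topspace Y = (\<Union>n. K n)" ..
  have K: "\<And>n. compactin Y (K n)" "topspace Y = (\<Union>n. K n)" using KK by simp_all
  have "\<exists>D. finite D \<and> D \<subseteq> Collect good \<and> K n \<subseteq> \<Union>D" for n
  proof -
    have "K n \<subseteq> topspace Y" using K(2) by blast
    then have "K n \<subseteq> \<Union>(Collect good)" using cover by blast
    moreover have "\<forall>C\<in>Collect good. openin Y C" by (auto simp: good_def)
    ultimately show ?thesis using K(1)[of n] unfolding compactin_def by blast
  qed
  then obtain Dn where Dn: "\<And>n. finite (Dn n)" "\<And>n. Dn n \<subseteq> Collect good" "\<And>n. K n \<subseteq> \<Union>(Dn n)"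
    by metis
  define D where "D = (\<Union>n. Dn n)"
  have Dc: "countable D" unfolding D_def using Dn(1) by (simp add: countable_finite)
  have Dg: "\<And>C. C \<in> D \<Longrightarrow> good C" using Dn(2) by (auto simp: D_def)
  have Dcov: "topspace Y \<subseteq> \<Union>D"
  proof
    fix x assume "x \<in> topspace Y"
    then obtain n where "x \<in> K n" using K(2) by blast
    then obtain C where "C \<in> Dn n" "x \<in> C" using Dn(3)[of n] by blast
    then show "x \<in> \<Union>D" unfolding D_def by blast
  qed
  show ?thesis
  proof (cases "gunits G = {}")
    case True
    then show ?thesis using tsY by (auto simp: Y_def)
  next
    case False
    then have "D \<noteq> {}" using Dcov tsY by blast
    define e where "e = from_nat_into D"
    have eD: "e n \<in> D" for n using \<open>D \<noteq> {}\<close> from_nat_into e_def by blast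
    have ecov: "x \<in> topspace Y \<Longrightarrow> \<exists>n. x \<in> e n" for x
      using Dcov range_from_nat_into[OF \<open>D \<noteq> {}\<close> Dc] e_def by blast
    have eg: "good (e n)" for n using Dg eD by blast
    define \<phi> where "\<phi> n = (SOME \<phi>. sec (e n) \<phi>)" for n
    have sec_n: "sec (e n) (\<phi> n)" for n using eg[of n] unfolding good_def \<phi>_def by (metis someI)
    define \<theta> where "\<theta> x = \<phi> (LEAST n. x \<in> e n) x" for x
    have eY: "e n \<subseteq> topspace Y" for n using eg[of n] openin_subset unfolding good_def by blast
    have prp: "grng G (\<theta> x) = x \<and> gsrc G (\<theta> x) \<in> F \<and> \<theta> x \<in> topspace (gtop G)" if x: "x \<in> topspace Y" for x
    proof -
      define N where "N = (LEAST n. x \<in> e n)"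
      have xN: "x \<in> e N" unfolding N_def using ecov[OF x] by (metis LeastI)
      have "\<phi> N x \<in> topspace (gtop G)" using sec_n[of N] xN eY[of N]
        unfolding sec_def continuous_map_def by auto
      then show ?thesis using sec_n[of N] xN unfolding sec_def \<theta>_def N_def[symmetric] by blast
    qed
    have cont: "continuous_map Y (gtop G) \<theta>"
    proof (rule cont_local)
      show "\<theta> \<in> topspace Y \<rightarrow> topspace (gtop G)" using prp by blast
      fix x assume x: "x \<in> topspace Y"
      define N where "N = (LEAST n. x \<in> e n)"
      have xN: "x \<in> e N" unfolding N_def using ecov[OF x] by (metis LeastI)
      define Dx where "Dx = e N \<inter> (topspace Y - \<Union>(e ` {..<N}))"
      have "closedin Y (\<Union>(e ` {..<N}))" using eg by (intro closedin_Union) (auto simp: good_def)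
      then have "openin Y Dx" unfolding Dx_def using eg[of N] by (auto simp: good_def)
      moreover have "x \<in> Dx" unfolding Dx_def using x xN N_def not_less_Least by blast
      moreover have "continuous_map (subtopology Y Dx) (gtop G) \<theta>"
      proof (rule continuous_map_eq)
        show "continuous_map (subtopology Y Dx) (gtop G) (\<phi> N)"
          using sec_n[of N] unfolding sec_def using continuous_map_from_subtopology_mono Dx_def by blast
        fix y assume "y \<in> topspace (subtopology Y Dx)"
        then have y: "y \<in> e N" "\<And>j. j < N \<Longrightarrow> y \<notin> e j" by (auto simp: Dx_def)
        have "(LEAST n. y \<in> e n) = N"
          by (rule Least_equality) (use y not_less in auto)
        then show "\<phi> N y = \<theta> y" by (simp add: \<theta>_def)
      qed
      ultimately show "\<exists>U. openin Y U \<and> x \<in> U \<and> continuous_map (subtopology Y U) (gtop G) \<theta>" by blast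
    qed
    show ?thesis using cont prp tsY unfolding Y_def by blast
  qed
qed


theorem theorem3p6:
  fixes G :: "'a groupoid" and F :: "'a set"
  assumes "etale_groupoid G"
    and "openin (unit_top G) F"
    and "G_full G F"
  shows "((\<exists>\<theta>. continuous_map (unit_top G) (gtop G) \<theta> \<and>
            (\<forall>x \<in> gunits G. grng G (\<theta> x) = x \<and> gsrc G (\<theta> x) \<in> F))
          \<longrightarrow> homologically_similar G (reduction G F))
     \<and> ((sigma_compact_space (unit_top G) \<and> totally_disconnected_space (unit_top G))
          \<longrightarrow> homologically_similar G (reduction G F))"
proof -
  have FU: "F \<subseteq> gunits G" using assms(3) unfolding G_full_def by blast
  have A: "homologically_similar G (reduction G F)" if "\<exists>\<theta>. continuous_map (unit_top G) (gtop G) \<theta> \<and>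
            (\<forall>x \<in> gunits G. grng G (\<theta> x) = x \<and> gsrc G (\<theta> x) \<in> F)"
    using that part1[OF assms(1,2) FU] by blast
  show ?thesis using A part2[OF assms(1,2,3)] by blast
qed

end
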